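(* Let $\kappa$ be an uncountable regular cardinal and let $\mathcal{I}$ be a $\kappa$-complete proper ideal on $\kappa$ containing every bounded subset of $\kappa$ and having a basis of size $\kappa$. Let $\langle B_\alpha:\alpha<\kappa\rangle$ be an approximation sequence of $\mathcal{I}$, and let $A\subseteq\kappa$ be unbounded. If $f\colon{}^{\kappa}\kappa\to{}^{\kappa}\kappa$ is $A$-recursive over $\langle B_\alpha:\alpha<\kappa\rangle$, then $f$ is continuous with respect to $\tau_{\mathcal{I}}$ on both sides.
   Context: A basis for $\mathcal{I}$ is a family $\mathcal{B}\subseteq\mathcal{I}$ such that every member of $\mathcal{I}$ is contained in a member of $\mathcal{B}$. An approximation sequence of $\mathcal{I}$ is a sequence $\langle B_\alpha:\alpha<\kappa\rangle$ of members of $\mathcal{I}$ with $B_0=\emptyset$, $B_\alpha\subsetneq B_\beta$ for $\alpha<\beta$, $B_\alpha=\bigcup_{\beta<\alpha}B_\beta$ for limit $\alpha$, and such that every $B\in\mathcal{I}$ satisfies $B\subsetneq B_\alpha$ for some $\alpha$. $\mathrm{Fn}_{\mathcal{I}}$ is the set of functions $D\to\kappa$ with $D\in\mathcal{I}$; $\tau_{\mathcal{I}}$ on ${}^{\kappa}\kappa$ is generated by the sets $\mathbf{N}_g=\{x:g\subseteq x\}$, $g\in\mathrm{Fn}_{\mathcal{I}}$. $H\colon\mathrm{Fn}_{\mathcal{I}}\to\mathrm{Fn}_{\mathcal{I}}$ is monotone if $g\subseteq h$ implies $H(g)\subseteq H(h)$. $f$ is $A$-recursive over $\langle B_\alpha\rangle$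 if there is a monotone $H\colon\mathrm{Fn}_{\mathcal{I}}\to\mathrm{Fn}_{\mathcal{I}}$ such that for every $\alpha\in A$ and every $x\in{}^{\kappa}\kappa$, $f(x)(\theta)=H(x\restriction B_\alpha)(\theta)$ for all $\theta\in B_{\alpha'}\cup(A\cap\alpha')$, where $\alpha'=\min(A\setminus(\alpha+1))$. *)

theory Defs
  imports "HOL-Analysis.Analysis" "HOL-Library.Equipollence"
begin

text \<open>The cardinal kappa is represented by a well-ordered type 'k whose elements are
  the ordinals below kappa; "alpha < kappa" is just "alpha :: 'k".\<close>

definition is_initial_wo :: "'k::wellorder itself \<Rightarrow> bool" where
  "is_initial_wo _ \<longleftrightarrow> (\<forall>a::'k. \<not> (UNIV::'k set) \<lesssim> {..<a})"

definition uncountable_regular_cardinal :: "'k::wellorder itself \<Rightarrow> bool" where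
  "uncountable_regular_cardinal K \<longleftrightarrow>
     is_initial_wo K \<and> uncountable (UNIV::'k set) \<and>
     (\<forall>X::'k set. \<not> (UNIV::'k set) \<lesssim> X \<longrightarrow> (\<exists>b. \<forall>x\<in>X. x < b))"

definition bounded_set :: "'k::wellorder set \<Rightarrow> bool" where
  "bounded_set X \<longleftrightarrow> (\<exists>b. \<forall>x\<in>X. x < b)"

definition unbounded_set :: "'k::wellorder set \<Rightarrow> bool" where
  "unbounded_set A \<longleftrightarrow> (\<forall>b. \<exists>a\<in>A. b \<le> a)"

definition is_ideal :: "'k set set \<Rightarrow> bool" where
  "is_ideal I \<longleftrightarrow> {} \<in> I \<and> (\<forall>X\<in>I. \<forall>Y. Y \<subseteq> X \<longrightarrow> Y \<in> I) \<and>
     (\<forall>X\<in>I. \<forall>Y\<in>I. X \<union> Y \<in> I)"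

definition kappa_complete :: "'k set set \<Rightarrow> bool" where
  "kappa_complete I \<longleftrightarrow> (\<forall>F. F \<subseteq> I \<and> \<not> (UNIV::'k set) \<lesssim> F \<longrightarrow> \<Union>F \<in> I)"

definition proper_ideal :: "'k set set \<Rightarrow> bool" where
  "proper_ideal I \<longleftrightarrow> (UNIV::'k set) \<notin> I"

definition is_basis :: "'k set set \<Rightarrow> 'k set set \<Rightarrow> bool" where
  "is_basis I \<B> \<longleftrightarrow> \<B> \<subseteq> I \<and> (\<forall>X\<in>I. \<exists>Y\<in>\<B>. X \<subseteq> Y)"

definition is_limit :: "'k::wellorder \<Rightarrow> bool" where
  "is_limit a \<longleftrightarrow> (\<exists>b. b < a) \<and> (\<forall>b<a. \<exists>c. b < c \<and> c < a)"

definition approximation_seq :: "'k::wellorder set set \<Rightarrow> ('k \<Rightarrow> 'k set) \<Rightarrow> bool" where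
  "approximation_seq I B \<longleftrightarrow>
     B (LEAST a. True) = {} \<and>
     (\<forall>a. B a \<in> I) \<and>
     (\<forall>a b. a < b \<longrightarrow> B a \<subset> B b) \<and>
     (\<forall>a. is_limit a \<longrightarrow> B a = (\<Union>b\<in>{..<a}. B b)) \<and>
     (\<forall>X\<in>I. \<exists>a. X \<subset> B a)"

definition Fn :: "'k set set \<Rightarrow> ('k \<rightharpoonup> 'k) set" where
  "Fn I = {g. dom g \<in> I}"

definition ext_by :: "('k \<rightharpoonup> 'k) \<Rightarrow> ('k \<Rightarrow> 'k) \<Rightarrow> bool" where
  "ext_by g x \<longleftrightarrow> (\<forall>t\<in>dom g. g t = Some (x t))"

definition Nbhd :: "('k \<rightharpoonup> 'k) \<Rightarrow> ('k \<Rightarrow> 'k) set" where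
  "Nbhd g = {x. ext_by g x}"

definition tau :: "'k set set \<Rightarrow> ('k \<Rightarrow> 'k) topology" where
  "tau I = topology_generated_by (Nbhd ` Fn I)"

definition restr :: "('k \<Rightarrow> 'k) \<Rightarrow> 'k set \<Rightarrow> ('k \<rightharpoonup> 'k)" where
  "restr x D = (Some \<circ> x) |` D"

definition monotone_Fn :: "'k set set \<Rightarrow> (('k \<rightharpoonup> 'k) \<Rightarrow> ('k \<rightharpoonup> 'k)) \<Rightarrow> bool" where
  "monotone_Fn I H \<longleftrightarrow> (\<forall>g\<in>Fn I. H g \<in> Fn I) \<and>
     (\<forall>g\<in>Fn I. \<forall>h\<in>Fn I. g \<subseteq>\<^sub>m h \<longrightarrow> H g \<subseteq>\<^sub>m H h)"

definition next_in :: "'k::wellorder set \<Rightarrow> 'k \<Rightarrow> 'k" where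
  "next_in A a = (LEAST c. c \<in> A \<and> a < c)"

definition A_recursive ::
  "'k::wellorder set set \<Rightarrow> 'k set \<Rightarrow> ('k \<Rightarrow> 'k set) \<Rightarrow> (('k \<Rightarrow> 'k) \<Rightarrow> ('k \<Rightarrow> 'k)) \<Rightarrow> bool" where
  "A_recursive I A B f \<longleftrightarrow>
     (\<exists>H. monotone_Fn I H \<and>
        (\<forall>a\<in>A. \<forall>x. \<forall>t \<in> B (next_in A a) \<union> (A \<inter> {..<next_in A a}).
            H (restr x (B a)) t = Some (f x t)))"

end

theory Submission
  imports Defs
begin

lemma no_max:
  assumes "uncountable_regular_cardinal TYPE('k::wellorder)"
  shows "\<exists>c. (a::'k) < c"
proof (rule ccontr)
  assume "\<not> (\<exists>c. a < c)"
  then have U: "(UNIV::'k set) = insert a {..<a}" by (auto simp: not_less intro: le_neq_trans)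
  have inf: "infinite (UNIV::'k set)" using assms
    unfolding uncountable_regular_cardinal_def using countable_finite by blast
  then have "infinite {..<a}" using U by (metis finite_insert)
  then have "insert a {..<a} \<approx> {..<a}" by (rule infinite_insert_eqpoll)
  then have "(UNIV::'k set) \<lesssim> {..<a}" using U eqpoll_imp_lepoll by metis
  then show False using assms
    unfolding uncountable_regular_cardinal_def is_initial_wo_def by blast
qed

theorem fact6p2:
  fixes I :: "'k::wellorder set set"
    and B :: "'k \<Rightarrow> 'k set"
    and A :: "'k set"
    and f :: "('k \<Rightarrow> 'k) \<Rightarrow> ('k \<Rightarrow> 'k)"
  assumes "uncountable_regular_cardinal TYPE('k)"
    and "is_ideal I" and "kappa_complete I" and "proper_ideal I"
    and "\<forall>X. bounded_set X \<longrightarrow> X \<in> I"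
    and "\<exists>\<B>. is_basis I \<B> \<and> \<B> \<approx> (UNIV::'k set)"
    and "approximation_seq I B"
    and "unbounded_set A"
    and "A_recursive I A B f"
  shows "continuous_map (tau I) (tau I) f"
proof -
  have emp: "Map.empty \<in> Fn I" using assms(2) by (simp add: Fn_def is_ideal_def)
  have topsp: "topspace (tau I) = UNIV"
    unfolding tau_def topology_generated_by_topspace
    using emp by (force simp: Nbhd_def ext_by_def)
  obtain H where Hm: "monotone_Fn I H" and
    HA0: "\<forall>a\<in>A. \<forall>x. \<forall>t \<in> B (next_in A a) \<union> (A \<inter> {..<next_in A a}).
            H (restr x (B a)) t = Some (f x t)"
    using assms(9) unfolding A_recursive_def by (elim exE conjE) 
  have HA: "\<And>a x t. a \<in> A \<Longrightarrow> t \<in> B (next_in A a) \<union> (A \<inter> {..<next_in A a}) \<Longrightarrow>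
            H (restr x (B a)) t = Some (f x t)" using HA0 by simp
  have BI: "\<And>a. B a \<in> I" and Bmono: "\<And>a b. a < b \<Longrightarrow> B a \<subset> B b"
    and Bcov: "\<And>X. X \<in> I \<Longrightarrow> \<exists>a. X \<subset> B a"
    using assms(7) unfolding approximation_seq_def by simp_all
  have nxt: "a < next_in A a" for a
  proof -
    obtain d where "a < d" using no_max[OF assms(1)] by blast
    moreover obtain c where "c \<in> A" "d \<le> c" using assms(8) unfolding unbounded_set_def by blast
    ultimately have "c \<in> A \<and> a < c" by simp
    then show ?thesis unfolding next_in_def by (metis (mono_tags, lifting) LeastI)
  qed
  show ?thesis
    unfolding tau_def
  proof (rule continuous_on_generated_topo)
    show "f ` topspace (topology_generated_by (Nbhd ` Fn I)) \<subseteq> \<Union> (Nbhd ` Fn I)"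
      using topsp unfolding tau_def by simp
  next
    fix U assume "U \<in> Nbhd ` Fn I"
    then obtain g where g: "g \<in> Fn I" and Ug: "U = Nbhd g" by blast
    have "openin (topology_generated_by (Nbhd ` Fn I)) (f -` U)"
    proof (subst openin_subopen, intro ballI)
      fix x assume x: "x \<in> f -` U"
      obtain a where a: "dom g \<subset> B a" using Bcov g unfolding Fn_def by blast
      obtain a' where a': "a' \<in> A" "a \<le> a'" using assms(8) unfolding unbounded_set_def by blast
      have sub: "dom g \<subseteq> B (next_in A a')"
        proof -
        have "a < next_in A a'" using le_less_trans[OF a'(2) nxt[of a']] .
        then have "B a \<subseteq> B (next_in A a')" using Bmono by blast
        then show ?thesis using a by blast
      qed
      let ?r = "restr x (B a')"
      have rF: "?r \<in> Fn I" using BI[of a'] proof - have "dom ?r = B a'" by (auto simp: restr_def restrict_map_def split: if_splits) then show ?thesis using BI[of a'] by (simp add: Fn_def) qed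
      show "\<exists>T. openin (topology_generated_by (Nbhd ` Fn I)) T \<and> x \<in> T \<and> T \<subseteq> f -` U"
      proof (intro exI conjI)
        show "openin (topology_generated_by (Nbhd ` Fn I)) (Nbhd ?r)"
          using rF by (intro topology_generated_by_Basis) blast
        show "x \<in> Nbhd ?r" by (simp add: Nbhd_def ext_by_def restr_def)
        show "Nbhd ?r \<subseteq> f -` U"
        proof
          fix y assume "y \<in> Nbhd ?r"
          then have "\<forall>t\<in>B a'. y t = x t" by (force simp: Nbhd_def ext_by_def restr_def dom_def restrict_map_def)
          then have ry: "restr y (B a') = ?r" by (auto simp: restr_def restrict_map_def)
          have "ext_by g (f y)" unfolding ext_by_def
          proof
            fix t assume t: "t \<in> dom g"
            then have tB: "t \<in> B (next_in A a') \<union> (A \<inter> {..<next_in A a'})" using sub by blast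
            have "Some (f y t) = Some (f x t)"
              using HA[OF a'(1) tB, of y] HA[OF a'(1) tB, of x] ry by simp
            moreover have "g t = Some (f x t)" using x t Ug by (simp add: Nbhd_def ext_by_def)
            ultimately show "g t = Some (f y t)" by simp
          qed
          then show "y \<in> f -` U" using Ug by (simp add: Nbhd_def)
        qed
      qed
    qed
    then show "openin (topology_generated_by (Nbhd ` Fn I)) (f -` U \<inter> topspace (topology_generated_by (Nbhd ` Fn I)))"
      using topsp unfolding tau_def by simp
  qed
qed

end
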